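(* Let $\mathbb{F}$ be a field, $D=(X,E,s,t)$ a finite directed multigraph, $U$ an $\mathbb{F}$-vector space and $\phi:X\to U$ a map. For each weakly connected component $C$ of $D$ fix a basepoint $r_C\in C$ and define the linear map $A_\phi:\bigoplus_C\mathbb{F}^{C\setminus\{r_C\}}\to U$ by $A_\phi(\mathbf{1}_x)=\phi(x)-\phi(r_C)$ for $x\in C\setminus\{r_C\}$. Then: (1) $\delta_\phi=\dim_{\mathbb{F}}\mathrm{Ker}(A_\phi)$, and this value is independent of the choice of basepoints; (2) $\delta_\phi=0$ if and only if the family $(\phi(x)-\phi(r_C))_{C,\,x\in C\setminus\{r_C\}}$ is $\mathbb{F}$-linearly independent in $U$; (3) if $D$ is (weakly) connected, then $\delta_\phi=0$ if and only if the family $(\phi(x))_{x\in X}$ is affinely independent in $U$.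
   Context: A finite directed multigraph $D=(X,E,s,t)$ has finite vertex set $X$, finite edge set $E$, and maps $s,t:E\to X$; loops and parallel edges allowed. $B_D:\mathbb{F}^E\to\mathbb{F}^X$ is the linear map with $B_D(\mathbf{1}_e)=\mathbf{1}_{t(e)}-\mathbf{1}_{s(e)}$; $\hat\phi:\mathbb{F}^X\to U$ is the linear extension $\mathbf{1}_x\mapsto\phi(x)$. The defect invariant is $\delta_\phi:=\dim_{\mathbb{F}}(\mathrm{Im}(B_D)\cap\mathrm{Ker}(\hat\phi))$. *)

theory Defs
  imports Complex_Main "HOL-Library.Function_Algebras"
begin

text \<open>Scalar multiplication on the coordinate spaces \<open>'i \<Rightarrow> 'f\<close> (pointwise).
  The spaces F^S for a finite set S are modelled as the functions supported in S.\<close>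
definition fscale :: "'f::field \<Rightarrow> ('i \<Rightarrow> 'f) \<Rightarrow> ('i \<Rightarrow> 'f)" where
  "fscale c v = (\<lambda>i. c * v i)"

definition supported_in :: "'i set \<Rightarrow> ('i \<Rightarrow> 'f::zero) set" where
  "supported_in S = {v. \<forall>i. i \<notin> S \<longrightarrow> v i = 0}"

definition incidence_map ::
  "'e set \<Rightarrow> ('e \<Rightarrow> 'x) \<Rightarrow> ('e \<Rightarrow> 'x) \<Rightarrow> ('e \<Rightarrow> 'f::field) \<Rightarrow> ('x \<Rightarrow> 'f)" where
  "incidence_map E s t v =
     (\<lambda>x. \<Sum>e\<in>E. v e * ((if t e = x then 1 else 0) - (if s e = x then 1 else 0)))"

definition lin_ext ::
  "('f \<Rightarrow> 'u \<Rightarrow> 'u) \<Rightarrow> 'x set \<Rightarrow> ('x \<Rightarrow> 'u::ab_group_add) \<Rightarrow> ('x \<Rightarrow> 'f) \<Rightarrow> 'u" where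
  "lin_ext scale X \<phi> w = (\<Sum>x\<in>X. scale (w x) (\<phi> x))"

definition defect ::
  "('f::field \<Rightarrow> 'u \<Rightarrow> 'u) \<Rightarrow> 'x set \<Rightarrow> 'e set \<Rightarrow> ('e \<Rightarrow> 'x) \<Rightarrow> ('e \<Rightarrow> 'x)
     \<Rightarrow> ('x \<Rightarrow> 'u::ab_group_add) \<Rightarrow> nat" where
  "defect scale X E s t \<phi> =
     vector_space.dim (fscale :: 'f \<Rightarrow> ('x \<Rightarrow> 'f) \<Rightarrow> _)
       ((incidence_map E s t ` supported_in E) \<inter>
        {w \<in> supported_in X. lin_ext scale X \<phi> w = 0})"

definition weak_rel :: "'x set \<Rightarrow> 'e set \<Rightarrow> ('e \<Rightarrow> 'x) \<Rightarrow> ('e \<Rightarrow> 'x) \<Rightarrow> ('x \<times> 'x) set" where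
  "weak_rel X E s t = (Id_on X \<union> (\<Union>e\<in>E. {(s e, t e), (t e, s e)}))\<^sup>*"

definition weak_components :: "'x set \<Rightarrow> 'e set \<Rightarrow> ('e \<Rightarrow> 'x) \<Rightarrow> ('e \<Rightarrow> 'x) \<Rightarrow> 'x set set" where
  "weak_components X E s t = X // weak_rel X E s t"

definition weakly_connected :: "'x set \<Rightarrow> 'e set \<Rightarrow> ('e \<Rightarrow> 'x) \<Rightarrow> ('e \<Rightarrow> 'x) \<Rightarrow> bool" where
  "weakly_connected X E s t \<longleftrightarrow> (\<forall>x\<in>X. \<forall>y\<in>X. (x, y) \<in> weak_rel X E s t)"

definition basepoint_choice ::
  "'x set \<Rightarrow> 'e set \<Rightarrow> ('e \<Rightarrow> 'x) \<Rightarrow> ('e \<Rightarrow> 'x) \<Rightarrow> ('x set \<Rightarrow> 'x) \<Rightarrow> bool" where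
  "basepoint_choice X E s t r \<longleftrightarrow> (\<forall>C\<in>weak_components X E s t. r C \<in> C)"

text \<open>Index set of the domain of A_\<phi>: the disjoint union over components C of C - {r C}
  (the components partition X, so this is X minus the basepoints).\<close>
definition nonbase :: "'x set \<Rightarrow> 'e set \<Rightarrow> ('e \<Rightarrow> 'x) \<Rightarrow> ('e \<Rightarrow> 'x) \<Rightarrow> ('x set \<Rightarrow> 'x) \<Rightarrow> 'x set" where
  "nonbase X E s t r = (\<Union>C\<in>weak_components X E s t. C - {r C})"

definition rel_vec ::
  "'x set \<Rightarrow> 'e set \<Rightarrow> ('e \<Rightarrow> 'x) \<Rightarrow> ('e \<Rightarrow> 'x) \<Rightarrow> ('x set \<Rightarrow> 'x) \<Rightarrow> ('x \<Rightarrow> 'u::ab_group_add) \<Rightarrow> 'x \<Rightarrow> 'u" where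
  "rel_vec X E s t r \<phi> x = \<phi> x - \<phi> (r (weak_rel X E s t `` {x}))"

definition A_map ::
  "('f \<Rightarrow> 'u \<Rightarrow> 'u) \<Rightarrow> 'x set \<Rightarrow> 'e set \<Rightarrow> ('e \<Rightarrow> 'x) \<Rightarrow> ('e \<Rightarrow> 'x) \<Rightarrow> ('x set \<Rightarrow> 'x)
     \<Rightarrow> ('x \<Rightarrow> 'u::ab_group_add) \<Rightarrow> ('x \<Rightarrow> 'f) \<Rightarrow> 'u" where
  "A_map scale X E s t r \<phi> w = (\<Sum>x\<in>nonbase X E s t r. scale (w x) (rel_vec X E s t r \<phi> x))"

definition ker_A ::
  "('f::field \<Rightarrow> 'u \<Rightarrow> 'u) \<Rightarrow> 'x set \<Rightarrow> 'e set \<Rightarrow> ('e \<Rightarrow> 'x) \<Rightarrow> ('e \<Rightarrow> 'x) \<Rightarrow> ('x set \<Rightarrow> 'x)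
     \<Rightarrow> ('x \<Rightarrow> 'u::ab_group_add) \<Rightarrow> ('x \<Rightarrow> 'f) set" where
  "ker_A scale X E s t r \<phi> =
     {w \<in> supported_in (nonbase X E s t r). A_map scale X E s t r \<phi> w = 0}"

definition lin_indep_family :: "('f::field \<Rightarrow> 'u \<Rightarrow> 'u) \<Rightarrow> 'i set \<Rightarrow> ('i \<Rightarrow> 'u::ab_group_add) \<Rightarrow> bool" where
  "lin_indep_family scale I v \<longleftrightarrow>
     (\<forall>c. (\<Sum>i\<in>I. scale (c i) (v i)) = 0 \<longrightarrow> (\<forall>i\<in>I. c i = 0))"

definition aff_indep_family :: "('f::field \<Rightarrow> 'u \<Rightarrow> 'u) \<Rightarrow> 'i set \<Rightarrow> ('i \<Rightarrow> 'u::ab_group_add) \<Rightarrow> bool" where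
  "aff_indep_family scale I v \<longleftrightarrow>
     (\<forall>c. (\<Sum>i\<in>I. c i) = 0 \<and> (\<Sum>i\<in>I. scale (c i) (v i)) = 0 \<longrightarrow> (\<forall>i\<in>I. c i = 0))"

end

theory Submission
  imports Defs
begin

lemma sum_fun_apply: "(sum f A) x = (\<Sum>a\<in>A. f a x)"
  by (induction A rule: infinite_finite_induct) (auto simp: plus_fun_def zero_fun_def)

lemma vs_fscale: "vector_space (fscale :: 'f::field \<Rightarrow> ('x \<Rightarrow> 'f) \<Rightarrow> _)"
  by unfold_locales (auto simp: fscale_def fun_eq_iff plus_fun_def algebra_simps)

interpretation F: vector_space "fscale :: 'f::field \<Rightarrow> ('x \<Rightarrow> 'f) \<Rightarrow> _"
  by (rule vs_fscale)

lemma F_dim_image_le: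
  fixes f :: "('x \<Rightarrow> 'f::field) \<Rightarrow> ('x \<Rightarrow> 'f)"
  assumes lf: "Vector_Spaces.linear fscale fscale f" and S: "S \<subseteq> F.span W" and W: "finite W"
  shows "F.dim (f ` S) \<le> F.dim S"
proof -
  obtain B where B: "B \<subseteq> S" "F.independent B" "S \<subseteq> F.span B" "card B = F.dim S"
    using F.basis_exists by blast
  have fB: "finite B"
    using F.independent_span_bound[OF W B(2)] B(1) S by blast
  interpret lf: Vector_Spaces.linear fscale fscale f by fact
  have "f ` S \<subseteq> F.span (f ` B)"
    using B(3) lf.spans_image by blast
  hence "F.dim (f ` S) \<le> card (f ` B)"
    using F.dim_le_card fB by blast
  also have "\<dots> \<le> card B" using card_image_le fB by blast
  finally show ?thesis using B(4) by simp
qed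

lemma sum_mult_delta1[simp]:
  fixes w :: "'a \<Rightarrow> 'f::field"
  shows "finite A \<Longrightarrow> (\<Sum>a\<in>A. w a * (if a = x then 1 else 0)) = (if x \<in> A then w x else 0)"
  by (simp add: if_distrib[where f="\<lambda>z. _ * z"] sum.delta' cong: if_cong)

lemma sum_mult_delta2[simp]:
  fixes w :: "'a \<Rightarrow> 'f::field"
  shows "finite A \<Longrightarrow> (\<Sum>a\<in>A. w a * (if x = a then 1 else 0)) = (if x \<in> A then w x else 0)"
  by (simp add: if_distrib[where f="\<lambda>z. _ * z"] sum.delta cong: if_cong)

definition delta :: "'x \<Rightarrow> 'x \<Rightarrow> 'f::field" where
  "delta a = (\<lambda>z. if a = z then 1 else 0)"

lemma supported_in_span:
  assumes "finite X"
  shows "supported_in X \<subseteq> F.span ((delta :: 'x \<Rightarrow> 'x \<Rightarrow> 'f::field) ` X)"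
proof
  fix w :: "'x \<Rightarrow> 'f" assume w: "w \<in> supported_in X"
  have "w = (\<Sum>x\<in>X. fscale (w x) (delta x))"
    using w assms by (auto simp: fun_eq_iff sum_fun_apply fscale_def delta_def supported_in_def)
  also have "\<dots> \<in> F.span (delta ` X)"
    by (intro F.span_sum F.span_scale F.span_base) auto
  finally show "w \<in> F.span (delta ` X)" .
qed

lemma F_dim_eq_0_iff:
  fixes S :: "('x \<Rightarrow> 'f::field) set"
  assumes S: "S \<subseteq> F.span W" and W: "finite W"
  shows "F.dim S = 0 \<longleftrightarrow> S \<subseteq> {0}"
proof
  assume d: "F.dim S = 0"
  obtain B where B: "B \<subseteq> S" "F.independent B" "S \<subseteq> F.span B" "card B = F.dim S"
    using F.basis_exists by blast
  have fB: "finite B"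
    using F.independent_span_bound[OF W B(2)] B(1) S by blast
  hence "B = {}" using B(4) d by simp
  thus "S \<subseteq> {0}" using B(3) by simp
next
  assume "S \<subseteq> {0}"
  hence "F.span S = F.span {}"
    by (metis F.span_empty F.span_mono F.span_span F.span_zero empty_subsetI subset_antisym subset_singleton_iff)
  hence "F.dim S = F.dim ({} :: ('x \<Rightarrow> 'f) set)" by (rule F.span_eq_dim)
  thus "F.dim S = 0" using F.dim_eq_card_independent[OF F.independent_empty] by simp
qed


lemma lin_ext_incidence:
  fixes scale :: "'f::field \<Rightarrow> 'u::ab_group_add \<Rightarrow> 'u"
  assumes vs: "vector_space scale" and fX: "finite X" and fE: "finite E'"
    and sE: "s' ` E' \<subseteq> X" and tE: "t' ` E' \<subseteq> X"
  shows "lin_ext scale X phi (incidence_map E' s' t' v)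
     = (\<Sum>e\<in>E'. scale (v e) (phi (t' e) - phi (s' e)))"
proof -
  interpret vector_space scale by (rule vs)
  have "lin_ext scale X phi (incidence_map E' s' t' v)
     = (\<Sum>x\<in>X. \<Sum>e\<in>E'. scale (v e * ((if t' e = x then 1 else 0) - (if s' e = x then 1 else 0))) (phi x))"
    unfolding lin_ext_def incidence_map_def by (simp add: scale_sum_left)
  also have "\<dots> = (\<Sum>e\<in>E'. \<Sum>x\<in>X. scale (v e * ((if t' e = x then 1 else 0) - (if s' e = x then 1 else 0))) (phi x))"
    by (rule sum.swap)
  also have "\<dots> = (\<Sum>e\<in>E'. scale (v e) (phi (t' e) - phi (s' e)))"
  proof (rule sum.cong[OF refl])
    fix e assume e: "e \<in> E'"
    have "(\<Sum>x\<in>X. scale (v e * ((if t' e = x then 1 else 0) - (if s' e = x then 1 else 0))) (phi x))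
       = (\<Sum>x\<in>X. (if t' e = x then scale (v e) (phi x) else 0) - (if s' e = x then scale (v e) (phi x) else 0))"
      by (rule sum.cong[OF refl]) (simp add: scale_left_diff_distrib)
    also have "\<dots> = scale (v e) (phi (t' e)) - scale (v e) (phi (s' e))"
      using e sE tE fX by (simp only: sum_subtractf sum.delta) (simp add: image_subset_iff)
    finally show "(\<Sum>x\<in>X. scale (v e * ((if t' e = x then 1 else 0) - (if s' e = x then 1 else 0))) (phi x))
       = scale (v e) (phi (t' e) - phi (s' e))" by (simp add: scale_right_diff_distrib)
  qed
  finally show ?thesis .
qed

lemma inc_add: "incidence_map E s t (v1 + v2) = incidence_map E s t v1 + incidence_map E s t v2"
  by (simp add: incidence_map_def fun_eq_iff plus_fun_def sum.distrib distrib_right)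

lemma inc_scale: "incidence_map E s t (fscale c v) = fscale c (incidence_map E s t v)"
  by (simp add: incidence_map_def fun_eq_iff fscale_def sum_distrib_left mult.assoc)

lemma inc_zero: "incidence_map E s t 0 = 0"
  by (simp add: incidence_map_def fun_eq_iff)

lemma inc_linear: "Vector_Spaces.linear fscale fscale (incidence_map E s t :: ('e \<Rightarrow> 'f::field) \<Rightarrow> _)"
  unfolding Vector_Spaces.linear_iff by (intro conjI vs_fscale allI inc_add inc_scale)

lemma inc_delta:
  assumes "e \<in> E" "finite E"
  shows "incidence_map E s t (delta e) = (\<lambda>z. delta (t e) z - delta (s e) z)"
proof
  fix z
  have "incidence_map E s t (delta e) z = (\<Sum>e'\<in>E. if e = e' then (delta (t e') z - delta (s e') z) else 0)"
    unfolding incidence_map_def by (rule sum.cong) (auto simp: delta_def)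
  also have "\<dots> = delta (t e) z - delta (s e) z" using assms by (simp add: sum.delta)
  finally show "incidence_map E s t (delta e) z = delta (t e) z - delta (s e) z" .
qed

lemma delta_supp: "e \<in> E \<Longrightarrow> delta e \<in> supported_in E"
  by (auto simp: delta_def supported_in_def)

lemma Im_subspace: "F.subspace (incidence_map E s t ` supported_in E :: ('x \<Rightarrow> 'f::field) set)"
  unfolding F.subspace_def
proof (intro conjI ballI allI)
  show "0 \<in> incidence_map E s t ` supported_in E"
    by (rule image_eqI[of _ _ 0]) (auto simp: inc_zero supported_in_def)
next
  fix x y :: "'x \<Rightarrow> 'f" assume "x \<in> incidence_map E s t ` supported_in E" "y \<in> incidence_map E s t ` supported_in E"
  then obtain v1 v2 where "v1 \<in> supported_in E" "v2 \<in> supported_in E" "x = incidence_map E s t v1" "y = incidence_map E s t v2"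
    by blast
  thus "x + y \<in> incidence_map E s t ` supported_in E"
    by (intro image_eqI[of _ _ "v1 + v2"]) (auto simp: inc_add supported_in_def)
next
  fix c :: 'f and x :: "'x \<Rightarrow> 'f" assume "x \<in> incidence_map E s t ` supported_in E"
  then obtain v where "v \<in> supported_in E" "x = incidence_map E s t v" by blast
  moreover have "fscale c v \<in> supported_in E" using \<open>v \<in> supported_in E\<close>
    by (auto simp: supported_in_def fscale_def)
  ultimately show "fscale c x \<in> incidence_map E s t ` supported_in E"
    using inc_scale[of E s t c v] by (metis image_eqI)
qed

locale psetup =
  fixes scale :: "'f::field \<Rightarrow> 'u::ab_group_add \<Rightarrow> 'u"
    and X :: "'x set" and E :: "'e set" and s t :: "'e \<Rightarrow> 'x"
    and phi :: "'x \<Rightarrow> 'u" and r :: "'x set \<Rightarrow> 'x"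
  assumes vs: "vector_space scale"
    and fX: "finite X" and fE: "finite E"
    and sE: "s ` E \<subseteq> X" and tE: "t ` E \<subseteq> X"
    and bp: "basepoint_choice X E s t r"
begin

abbreviation "R \<equiv> weak_rel X E s t"
abbreviation "cl x \<equiv> R `` {x}"
abbreviation "b x \<equiv> r (cl x)"
abbreviation "N \<equiv> nonbase X E s t r"

lemma R_closed: "(a, c) \<in> R \<Longrightarrow> a \<in> X \<Longrightarrow> c \<in> X"
  unfolding weak_rel_def
proof (induction rule: rtrancl_induct)
  case (step y z)
  from step(2) show ?case
  proof
    assume "(y, z) \<in> Id_on X" thus ?thesis by (simp add: Id_on_def)
  next
    assume "(y, z) \<in> (\<Union>e\<in>E. {(s e, t e), (t e, s e)})"
    then obtain e where "e \<in> E" "(y, z) = (s e, t e) \<or> (y, z) = (t e, s e)" by blast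
    thus ?thesis using sE tE by blast
  qed
qed simp

lemma R_sym: "(a, c) \<in> R \<Longrightarrow> (c, a) \<in> R"
proof -
  have "sym (Id_on X \<union> (\<Union>e\<in>E. {(s e, t e), (t e, s e)}))"
    by (auto simp: sym_def)
  hence "sym R" unfolding weak_rel_def by (rule sym_rtrancl)
  thus "(a, c) \<in> R \<Longrightarrow> (c, a) \<in> R" by (meson symD)
qed

lemma R_trans: "(a, c) \<in> R \<Longrightarrow> (c, d) \<in> R \<Longrightarrow> (a, d) \<in> R"
  unfolding weak_rel_def by (rule rtrancl_trans)

lemma cl_sub: "x \<in> X \<Longrightarrow> cl x \<subseteq> X"
  using R_closed by blast

lemma cl_self: "x \<in> cl x"
  unfolding weak_rel_def by blast

lemma cl_eq: "y \<in> cl x \<Longrightarrow> cl y = cl x"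
  using R_sym R_trans by blast

lemma cl_comp: "x \<in> X \<Longrightarrow> cl x \<in> weak_components X E s t"
  unfolding weak_components_def by (rule quotientI)

lemma b_in: "x \<in> X \<Longrightarrow> b x \<in> cl x"
  using bp cl_comp unfolding basepoint_choice_def by blast

lemma b_X: "x \<in> X \<Longrightarrow> b x \<in> X"
  using b_in cl_sub by blast

lemma b_b: "x \<in> X \<Longrightarrow> b (b x) = b x"
  using b_in cl_eq by metis

lemma N_iff: "x \<in> N \<longleftrightarrow> x \<in> X \<and> b x \<noteq> x"
proof
  assume "x \<in> N"
  then obtain C where C: "C \<in> weak_components X E s t" "x \<in> C" "x \<noteq> r C"
    unfolding nonbase_def by blast
  then obtain a where a: "a \<in> X" "C = cl a"
    unfolding weak_components_def by (auto elim!: quotientE)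
  have "cl x = cl a" using C(2) a(2) by (simp add: cl_eq)
  moreover have "x \<in> X" using a C(2) cl_sub by blast
  ultimately show "x \<in> X \<and> b x \<noteq> x" using C(3) a(2) by simp
next
  assume x: "x \<in> X \<and> b x \<noteq> x"
  hence "x \<in> cl x - {b x}" using cl_self[of x] by auto
  thus "x \<in> N" unfolding nonbase_def using cl_comp x by blast
qed

lemma fN: "finite N"
proof -
  have "N \<subseteq> X" using N_iff by blast
  thus ?thesis using fX finite_subset by blast
qed

abbreviation "Psi (u :: 'x \<Rightarrow> 'f) \<equiv> incidence_map N b (\<lambda>y. y) u"
abbreviation "Pi w \<equiv> (\<lambda>x. if x \<in> N then w x else (0::'f))"
abbreviation "ImB \<equiv> (incidence_map E s t ` supported_in E :: ('x \<Rightarrow> 'f) set)"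
abbreviation "D0 \<equiv> ImB \<inter> {w \<in> supported_in X. lin_ext scale X phi w = 0}"
abbreviation "KA \<equiv> ker_A scale X E s t r phi"

lemma N_X: "y \<in> N \<Longrightarrow> y \<in> X" using N_iff by blast

lemma A_eq: "A_map scale X E s t r phi u = lin_ext scale X phi (Psi u)"
proof -
  have "b ` N \<subseteq> X" "(\<lambda>y. y) ` N \<subseteq> X" using N_X b_X by auto
  thus ?thesis
    by (simp add: lin_ext_incidence[OF vs fX fN] A_map_def rel_vec_def)
qed

lemma Psi_out: "z \<notin> X \<Longrightarrow> Psi u z = 0"
  unfolding incidence_map_def by (rule sum.neutral) (use N_X b_X in fastforce)

lemma Psi_N: "z \<in> N \<Longrightarrow> Psi u z = u z"
proof -
  assume z: "z \<in> N"
  have "Psi u z = (\<Sum>y\<in>N. u y * (if y = z then 1 else 0))"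
    unfolding incidence_map_def
  proof (rule sum.cong[OF refl])
    fix y assume y: "y \<in> N"
    have "b y \<noteq> z"
    proof
      assume "b y = z"
      hence "b z = z" using b_b N_X y by metis
      thus False using z N_iff by blast
    qed
    thus "u y * ((if y = z then 1 else 0) - (if b y = z then 1 else 0)) = u y * (if y = z then 1 else 0)"
      by simp
  qed
  also have "\<dots> = u z" using z fN by simp
  finally show ?thesis .
qed

lemma Psi_base: "z \<in> X \<Longrightarrow> b z = z \<Longrightarrow> Psi u z = - (\<Sum>y\<in>{y\<in>N. b y = z}. u y)"
proof -
  assume z: "z \<in> X" "b z = z"
  have "Psi u z = (\<Sum>y\<in>N. - (if b y = z then u y else 0))"
    unfolding incidence_map_def
  proof (rule sum.cong[OF refl])
    fix y assume y: "y \<in> N"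
    have "y \<noteq> z" using y z N_iff by blast
    thus "u y * ((if y = z then 1 else 0) - (if b y = z then 1 else 0)) = - (if b y = z then u y else 0)"
      by simp
  qed
  also have "\<dots> = - (\<Sum>y\<in>{y\<in>N. b y = z}. u y)"
    by (simp add: sum_negf sum.inter_filter fN)
  finally show ?thesis .
qed

lemma CS: "z \<in> X \<Longrightarrow> (\<Sum>y\<in>cl z. incidence_map E s t v y) = (0::'f)"
proof -
  assume z: "z \<in> X"
  have fc: "finite (cl z)" using cl_sub[OF z] fX finite_subset by blast
  have "(\<Sum>y\<in>cl z. incidence_map E s t v y)
      = (\<Sum>e\<in>E. \<Sum>y\<in>cl z. v e * ((if t e = y then 1 else 0) - (if s e = y then 1 else 0)))"
    unfolding incidence_map_def by (rule sum.swap)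
  also have "\<dots> = (\<Sum>e\<in>E. 0)"
  proof (rule sum.cong[OF refl])
    fix e assume e: "e \<in> E"
    have st: "(s e, t e) \<in> R" unfolding weak_rel_def using e by blast
    have iff: "t e \<in> cl z \<longleftrightarrow> s e \<in> cl z"
      using st R_sym R_trans by blast
    have "(\<Sum>y\<in>cl z. v e * ((if t e = y then 1 else 0) - (if s e = y then 1 else 0)))
        = v e * ((\<Sum>y\<in>cl z. (if t e = y then 1 else 0)) - (\<Sum>y\<in>cl z. (if s e = y then 1 else 0)))"
      by (simp add: sum_distrib_left sum_subtractf right_diff_distrib)
    also have "\<dots> = 0" using iff fc by (simp add: sum.delta)
    finally show "(\<Sum>y\<in>cl z. v e * ((if t e = y then 1 else 0) - (if s e = y then 1 else 0))) = 0" .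
  qed
  finally show ?thesis by simp
qed

lemma cl_decomp: "z \<in> X \<Longrightarrow> b z = z \<Longrightarrow> cl z = insert z {y\<in>N. b y = z} \<and> z \<notin> {y\<in>N. b y = z}"
proof -
  assume z: "z \<in> X" "b z = z"
  have "cl z \<subseteq> insert z {y\<in>N. b y = z}"
  proof
    fix y assume y: "y \<in> cl z"
    have "cl y = cl z" using y cl_eq by blast
    moreover have "y \<in> X" using y cl_sub z by blast
    ultimately show "y \<in> insert z {y\<in>N. b y = z}" using z N_iff by auto
  qed
  moreover have "insert z {y\<in>N. b y = z} \<subseteq> cl z"
  proof
    fix y assume y: "y \<in> insert z {y\<in>N. b y = z}"
    show "y \<in> cl z"
    proof (cases "y = z")
      case True thus ?thesis using cl_self by blast
    next
      case False
      hence "y \<in> N" "b y = z" using y by auto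
      hence "z \<in> cl y" using b_in N_X by metis
      thus ?thesis using cl_eq cl_self by blast
    qed
  qed
  moreover have "z \<notin> N" using z N_iff by blast
  ultimately show ?thesis by blast
qed

lemma Pi_Psi: "u \<in> supported_in N \<Longrightarrow> Pi (Psi u) = u"
  by (auto simp: fun_eq_iff Psi_N supported_in_def)

lemma Psi_Pi: "w \<in> D0 \<Longrightarrow> Psi (Pi w) = w"
proof
  fix z assume w: "w \<in> D0"
  have "w \<in> ImB" using w by (rule IntD1)
  then obtain v where v: "w = incidence_map E s t v" by (rule imageE)
  have wX: "\<forall>i. i \<notin> X \<longrightarrow> w i = 0" using w unfolding supported_in_def by (rule IntE) simp
  show "Psi (Pi w) z = w z"
  proof (cases "z \<in> X")
    case False thus ?thesis using Psi_out[of z "Pi w"] wX by simp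
  next
    case zX: True
    show ?thesis
    proof (cases "z \<in> N")
      case True thus ?thesis using Psi_N[of z "Pi w"] by simp
    next
      case False
      hence bz: "b z = z" using zX N_iff by blast
      have "Psi (Pi w) z = - (\<Sum>y\<in>{y\<in>N. b y = z}. Pi w y)"
        by (rule Psi_base[OF zX bz])
      also have "(\<Sum>y\<in>{y\<in>N. b y = z}. Pi w y) = (\<Sum>y\<in>{y\<in>N. b y = z}. w y)"
        by (rule sum.cong) auto
      finally have 1: "Psi (Pi w) z = - (\<Sum>y\<in>{y\<in>N. b y = z}. w y)" .
      have 2: "(\<Sum>y\<in>cl z. w y) = 0" using CS[OF zX, of v] v by simp
      have fS: "finite {y\<in>N. b y = z}" using fN by simp
      have cd: "cl z = insert z {y\<in>N. b y = z}" "z \<notin> {y\<in>N. b y = z}"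
        using cl_decomp[OF zX bz] by auto
      have "(\<Sum>y\<in>cl z. w y) = (\<Sum>y\<in>insert z {y\<in>N. b y = z}. w y)" by (simp only: cd(1))
      also have "\<dots> = w z + (\<Sum>y\<in>{y\<in>N. b y = z}. w y)" by (rule sum.insert[OF fS cd(2)])
      finally have 3: "(\<Sum>y\<in>cl z. w y) = w z + (\<Sum>y\<in>{y\<in>N. b y = z}. w y)" .
      from 2 3 have "w z + (\<Sum>y\<in>{y\<in>N. b y = z}. w y) = 0" by simp
      hence "w z = - (\<Sum>y\<in>{y\<in>N. b y = z}. w y)" by (simp add: eq_neg_iff_add_eq_0)
      with 1 show ?thesis by simp
    qed
  qed
qed

lemma path_Im: "(a, c) \<in> R \<Longrightarrow> (\<lambda>z. delta c z - delta a z) \<in> ImB"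
  unfolding weak_rel_def
proof (induction rule: rtrancl_induct)
  case base
  have "(\<lambda>z. delta a z - delta a z :: 'f) = 0" by (simp add: fun_eq_iff)
  thus ?case using F.subspace_0[OF Im_subspace] by simp
next
  case (step y z)
  have eq: "(\<lambda>w. delta z w - delta a w :: 'f) = (\<lambda>w. delta y w - delta a w) + (\<lambda>w. delta z w - delta y w)"
    by (simp add: fun_eq_iff plus_fun_def)
  have "(\<lambda>w. delta z w - delta y w :: 'f) \<in> ImB"
    using step(2)
  proof (rule UnE)
    assume "(y, z) \<in> Id_on X"
    hence "z = y" by (rule Id_onE) simp
    hence "(\<lambda>w. delta z w - delta y w :: 'f) = 0" by (simp add: fun_eq_iff)
    thus ?thesis using F.subspace_0[OF Im_subspace] by simp
  next
    assume "(y, z) \<in> (\<Union>e\<in>E. {(s e, t e), (t e, s e)})"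
    then obtain e where e: "e \<in> E" "(y, z) = (s e, t e) \<or> (y, z) = (t e, s e)" by blast
    have "incidence_map E s t (delta e) \<in> ImB" by (rule imageI[OF delta_supp[OF e(1)]])
    hence Ie: "(\<lambda>w. delta (t e) w - delta (s e) w :: 'f) \<in> ImB"
      by (simp only: inc_delta[OF e(1) fE])
    from e(2) show ?thesis
    proof (rule disjE)
      assume "(y, z) = (s e, t e)" thus ?thesis using Ie by simp
    next
      assume yz: "(y, z) = (t e, s e)"
      have "fscale (-1) (\<lambda>w. delta (t e) w - delta (s e) w :: 'f) \<in> ImB"
        by (rule F.subspace_scale[OF Im_subspace Ie])
      moreover have "fscale (-1) (\<lambda>w. delta (t e) w - delta (s e) w :: 'f) = (\<lambda>w. delta z w - delta y w)"
        using yz by (simp add: fscale_def fun_eq_iff)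
      ultimately show ?thesis by simp
    qed
  qed
  with step(3) have "(\<lambda>w. delta y w - delta a w) + (\<lambda>w. delta z w - delta y w :: 'f) \<in> ImB"
    by (rule F.subspace_add[OF Im_subspace])
  thus ?case using eq by simp
qed

lemma Psi_Im: "Psi u \<in> ImB"
proof -
  have "Psi u = (\<Sum>y\<in>N. fscale (u y) (\<lambda>z. delta y z - delta (b y) z))"
    by (simp add: fun_eq_iff sum_fun_apply fscale_def incidence_map_def delta_def)
  also have "\<dots> \<in> ImB"
  proof (rule F.subspace_sum[OF Im_subspace], rule F.subspace_scale[OF Im_subspace])
    fix y assume y: "y \<in> N"
    have "(y, b y) \<in> R" using b_in N_X y by blast
    hence "(b y, y) \<in> R" by (rule R_sym)
    thus "(\<lambda>z. delta y z - delta (b y) z) \<in> ImB" by (rule path_Im)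
  qed
  finally show ?thesis .
qed

lemma Pi_lin: "Vector_Spaces.linear fscale fscale Pi"
  unfolding Vector_Spaces.linear_iff
  by (intro conjI vs_fscale allI) (auto simp: fun_eq_iff plus_fun_def fscale_def)

lemma Pi_KA: "w \<in> D0 \<Longrightarrow> Pi w \<in> KA"
proof -
  assume w: "w \<in> D0"
  have "A_map scale X E s t r phi (Pi w) = lin_ext scale X phi (Psi (Pi w))" by (rule A_eq)
  also have "\<dots> = lin_ext scale X phi w" using Psi_Pi[OF w] by simp
  also have "\<dots> = 0" using w by blast
  finally show ?thesis unfolding ker_A_def supported_in_def by simp
qed

lemma Psi_D0: "u \<in> KA \<Longrightarrow> Psi u \<in> D0"
proof -
  assume u: "u \<in> KA"
  have "lin_ext scale X phi (Psi u) = A_map scale X E s t r phi u" by (rule A_eq[symmetric])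
  also have "\<dots> = 0" using u unfolding ker_A_def by blast
  finally have "lin_ext scale X phi (Psi u) = 0" .
  moreover have "Psi u \<in> supported_in X" unfolding supported_in_def using Psi_out by blast
  ultimately show ?thesis using Psi_Im by blast
qed

lemma D0_eq: "D0 = Psi ` KA"
proof
  show "D0 \<subseteq> Psi ` KA"
  proof
    fix w assume w: "w \<in> D0"
    have "w = Psi (Pi w)" using Psi_Pi[OF w] by simp
    thus "w \<in> Psi ` KA" using Pi_KA[OF w] by blast
  qed
next
  show "Psi ` KA \<subseteq> D0" using Psi_D0 by blast
qed

lemma KA_eq: "KA = Pi ` D0"
proof
  show "KA \<subseteq> Pi ` D0"
  proof
    fix u assume u: "u \<in> KA"
    have "u = Pi (Psi u)" using Pi_Psi[of u] u unfolding ker_A_def by simp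
    thus "u \<in> Pi ` D0" using Psi_D0[OF u] by blast
  qed
next
  show "Pi ` D0 \<subseteq> KA" using Pi_KA by blast
qed

lemma D0_span: "D0 \<subseteq> F.span (delta ` X)"
  using supported_in_span[OF fX] by blast

lemma KA_span: "KA \<subseteq> F.span (delta ` X)"
proof -
  have "KA \<subseteq> supported_in X" unfolding ker_A_def supported_in_def using N_X by blast
  thus ?thesis using supported_in_span[OF fX] by blast
qed

lemma defect_eq: "defect scale X E s t phi = F.dim KA"
proof -
  have d: "defect scale X E s t phi = F.dim D0" unfolding defect_def by simp
  have "F.dim D0 \<le> F.dim KA"
    using F_dim_image_le[OF inc_linear KA_span, of N b "\<lambda>y. y"] D0_eq fX by simp
  moreover have "F.dim KA \<le> F.dim D0"
    using F_dim_image_le[OF Pi_lin D0_span] KA_eq fX by simp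
  ultimately show ?thesis using d by simp
qed

lemma part2: "defect scale X E s t phi = 0 \<longleftrightarrow> lin_indep_family scale N (rel_vec X E s t r phi)"
proof -
  have "F.dim KA = 0 \<longleftrightarrow> KA \<subseteq> {0}"
    by (rule F_dim_eq_0_iff[OF KA_span]) (simp add: fX)
  hence "defect scale X E s t phi = 0 \<longleftrightarrow> KA \<subseteq> {0}"
    by (simp only: defect_eq)
  also have "\<dots> \<longleftrightarrow> lin_indep_family scale N (rel_vec X E s t r phi)"
  proof
    assume K: "KA \<subseteq> {0}"
    show "lin_indep_family scale N (rel_vec X E s t r phi)"
      unfolding lin_indep_family_def
    proof (intro allI impI ballI)
      fix c i assume c: "(\<Sum>i\<in>N. scale (c i) (rel_vec X E s t r phi i)) = 0" and i: "i \<in> N"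
      have "A_map scale X E s t r phi (Pi c) = (\<Sum>i\<in>N. scale (c i) (rel_vec X E s t r phi i))"
        unfolding A_map_def by (rule sum.cong) auto
      hence "Pi c \<in> KA" using c unfolding ker_A_def supported_in_def by simp
      hence "Pi c = 0" using K by blast
      hence "Pi c i = 0" using fun_cong[of "Pi c" 0 i] by simp
      thus "c i = 0" using i by simp
    qed
  next
    assume L: "lin_indep_family scale N (rel_vec X E s t r phi)"
    show "KA \<subseteq> {0}"
    proof
      fix u assume u: "u \<in> KA"
      hence "(\<Sum>i\<in>N. scale (u i) (rel_vec X E s t r phi i)) = 0"
        unfolding ker_A_def A_map_def by blast
      hence "\<forall>i\<in>N. u i = 0" using L unfolding lin_indep_family_def by blast
      moreover have "\<forall>i. i \<notin> N \<longrightarrow> u i = 0" using u unfolding ker_A_def supported_in_def by blast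
      ultimately have "u = 0" by (auto simp: fun_eq_iff)
      thus "u \<in> {0}" by simp
    qed
  qed
  finally show ?thesis .
qed

lemma part3:
  assumes wc: "weakly_connected X E s t"
  shows "lin_indep_family scale N (rel_vec X E s t r phi) \<longleftrightarrow> aff_indep_family scale X phi"
proof (cases "X = {}")
  case True
  hence "N = {}" using N_X by blast
  thus ?thesis using True unfolding lin_indep_family_def aff_indep_family_def by simp
next
  case False
  interpret V: vector_space scale by (rule vs)
  obtain x0 where x0: "x0 \<in> X" using False by blast
  define \<rho> where "\<rho> = b x0"
  have clX: "cl x = X" if x: "x \<in> X" for x
  proof
    show "cl x \<subseteq> X" by (rule cl_sub[OF x])
    show "X \<subseteq> cl x"
    proof
      fix y assume y: "y \<in> X"
      have "(x, y) \<in> R" using wc x y unfolding weakly_connected_def by blast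
      thus "y \<in> cl x" by simp
    qed
  qed
  have \<rho>r: "\<rho> = r X" unfolding \<rho>_def using clX[OF x0] by (simp only:)
  have bx: "b x = \<rho>" if x: "x \<in> X" for x using clX[OF x] \<rho>r by (simp only:)
  have \<rho>X: "\<rho> \<in> X" unfolding \<rho>_def using b_X x0 by simp
  have NX: "N = X - {\<rho>}"
  proof (rule set_eqI)
    fix x show "x \<in> N \<longleftrightarrow> x \<in> X - {\<rho>}"
      using N_iff[of x] bx[of x] by auto
  qed
  have rv: "x \<in> N \<Longrightarrow> rel_vec X E s t r phi x = phi x - phi \<rho>" for x
    unfolding rel_vec_def using bx N_X by simp
  have fN': "finite (X - {\<rho>})" using fX by simp
  have key: "(\<Sum>i\<in>N. scale (c i) (rel_vec X E s t r phi i))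
      = (\<Sum>i\<in>X - {\<rho>}. scale (c i) (phi i)) - scale (\<Sum>i\<in>X - {\<rho>}. c i) (phi \<rho>)" for c
  proof -
    have "(\<Sum>i\<in>N. scale (c i) (rel_vec X E s t r phi i)) = (\<Sum>i\<in>X - {\<rho>}. scale (c i) (phi i) - scale (c i) (phi \<rho>))"
      unfolding NX by (rule sum.cong) (auto simp: rv NX V.scale_right_diff_distrib)
    also have "\<dots> = (\<Sum>i\<in>X - {\<rho>}. scale (c i) (phi i)) - scale (\<Sum>i\<in>X - {\<rho>}. c i) (phi \<rho>)"
      by (simp add: sum_subtractf V.scale_sum_left)
    finally show ?thesis .
  qed
  have splitX: "sum f X = f \<rho> + sum f (X - {\<rho>})" for f :: "'x \<Rightarrow> 'b::comm_monoid_add"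
    using sum.remove[OF fX \<rho>X] by simp
  show ?thesis
  proof
    assume L: "lin_indep_family scale N (rel_vec X E s t r phi)"
    show "aff_indep_family scale X phi"
      unfolding aff_indep_family_def
    proof (intro allI impI ballI)
      fix c i assume c: "sum c X = 0 \<and> (\<Sum>i\<in>X. scale (c i) (phi i)) = 0" and i: "i \<in> X"
      have s1: "(\<Sum>i\<in>X - {\<rho>}. c i) = - c \<rho>" using c splitX[of c] by (simp add: eq_neg_iff_add_eq_0 add.commute)
      have s2: "(\<Sum>i\<in>X - {\<rho>}. scale (c i) (phi i)) = - scale (c \<rho>) (phi \<rho>)"
        using c splitX[of "\<lambda>i. scale (c i) (phi i)"] by (simp add: eq_neg_iff_add_eq_0 add.commute)
      have "(\<Sum>i\<in>N. scale (c i) (rel_vec X E s t r phi i)) = 0"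
        unfolding key s1 s2 by (simp add: V.scale_minus_left)
      hence cN: "\<forall>i\<in>N. c i = 0" using L unfolding lin_indep_family_def by blast
      hence "(\<Sum>i\<in>X - {\<rho>}. c i) = 0" unfolding NX by simp
      hence "c \<rho> = 0" using s1 by simp
      thus "c i = 0" using cN NX i by blast
    qed
  next
    assume A: "aff_indep_family scale X phi"
    show "lin_indep_family scale N (rel_vec X E s t r phi)"
      unfolding lin_indep_family_def
    proof (intro allI impI ballI)
      fix c i assume c: "(\<Sum>i\<in>N. scale (c i) (rel_vec X E s t r phi i)) = 0" and i: "i \<in> N"
      define c' where "c' = c(\<rho> := - (\<Sum>i\<in>X - {\<rho>}. c i))"
      have eqc: "(\<Sum>i\<in>X - {\<rho>}. f (c' i)) = (\<Sum>i\<in>X - {\<rho>}. f (c i))" for f :: "'f \<Rightarrow> 'b::comm_monoid_add"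
        by (rule sum.cong) (auto simp: c'_def)
      have "sum c' X = 0"
        using splitX[of c'] eqc[of "\<lambda>x. x"] by (simp add: c'_def)
      moreover have "(\<Sum>i\<in>X. scale (c' i) (phi i)) = 0"
      proof -
        have "(\<Sum>i\<in>X. scale (c' i) (phi i)) = scale (c' \<rho>) (phi \<rho>) + (\<Sum>i\<in>X - {\<rho>}. scale (c' i) (phi i))"
          by (rule splitX)
        also have "(\<Sum>i\<in>X - {\<rho>}. scale (c' i) (phi i)) = (\<Sum>i\<in>X - {\<rho>}. scale (c i) (phi i))"
          by (rule sum.cong) (auto simp: c'_def)
        also have "scale (c' \<rho>) (phi \<rho>) = - scale (\<Sum>i\<in>X - {\<rho>}. c i) (phi \<rho>)"
          by (simp add: c'_def V.scale_minus_left)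
        finally show ?thesis using c key[of c] by simp
      qed
      ultimately have "\<forall>i\<in>X. c' i = 0" using A unfolding aff_indep_family_def by blast
      moreover have "i \<in> X" "i \<noteq> \<rho>" using i NX by auto
      ultimately have "c' i = 0" by blast
      thus "c i = 0" using \<open>i \<noteq> \<rho>\<close> by (simp add: c'_def)
    qed
  qed
qed

end



theorem proposition2p10:
  fixes scale :: "'f::field \<Rightarrow> 'u::ab_group_add \<Rightarrow> 'u"
    and X :: "'x set" and E :: "'e set" and s t :: "'e \<Rightarrow> 'x"
    and \<phi> :: "'x \<Rightarrow> 'u" and r :: "'x set \<Rightarrow> 'x"
  assumes "vector_space scale"
    and "finite X" and "finite E"
    and "s ` E \<subseteq> X" and "t ` E \<subseteq> X"
    and "basepoint_choice X E s t r"
  shows "defect scale X E s t \<phi> =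
           vector_space.dim (fscale :: 'f \<Rightarrow> ('x \<Rightarrow> 'f) \<Rightarrow> _) (ker_A scale X E s t r \<phi>)
       \<and> (\<forall>r'. basepoint_choice X E s t r' \<longrightarrow>
             vector_space.dim (fscale :: 'f \<Rightarrow> ('x \<Rightarrow> 'f) \<Rightarrow> _) (ker_A scale X E s t r' \<phi>)
           = vector_space.dim (fscale :: 'f \<Rightarrow> ('x \<Rightarrow> 'f) \<Rightarrow> _) (ker_A scale X E s t r \<phi>))
       \<and> (defect scale X E s t \<phi> = 0 \<longleftrightarrow>
             lin_indep_family scale (nonbase X E s t r) (rel_vec X E s t r \<phi>))
       \<and> (weakly_connected X E s t \<longrightarrow>
             (defect scale X E s t \<phi> = 0 \<longleftrightarrow> aff_indep_family scale X \<phi>))"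
proof -
  interpret P: psetup scale X E s t \<phi> r by (rule psetup.intro[OF assms])
  have 1: "\<forall>r'. basepoint_choice X E s t r' \<longrightarrow>
             vector_space.dim (fscale :: 'f \<Rightarrow> ('x \<Rightarrow> 'f) \<Rightarrow> _) (ker_A scale X E s t r' \<phi>)
           = vector_space.dim (fscale :: 'f \<Rightarrow> ('x \<Rightarrow> 'f) \<Rightarrow> _) (ker_A scale X E s t r \<phi>)"
  proof (intro allI impI)
    fix r' assume "basepoint_choice X E s t r'"
    then interpret P': psetup scale X E s t \<phi> r' by (rule psetup.intro[OF assms(1-5)])
    show "vector_space.dim (fscale :: 'f \<Rightarrow> ('x \<Rightarrow> 'f) \<Rightarrow> _) (ker_A scale X E s t r' \<phi>)
           = vector_space.dim (fscale :: 'f \<Rightarrow> ('x \<Rightarrow> 'f) \<Rightarrow> _) (ker_A scale X E s t r \<phi>)"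
      using P.defect_eq P'.defect_eq by (simp only:)
  qed
  have 3: "weakly_connected X E s t \<longrightarrow>
             (defect scale X E s t \<phi> = 0 \<longleftrightarrow> aff_indep_family scale X \<phi>)"
  proof
    assume "weakly_connected X E s t"
    from P.part3[OF this] P.part2
    show "defect scale X E s t \<phi> = 0 \<longleftrightarrow> aff_indep_family scale X \<phi>" by (simp only:)
  qed
  show ?thesis by (intro conjI P.defect_eq 1 P.part2 3)
qed

end
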